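(* Let $(X_k)$ be a Markov chain on a finite state space $E$ with irreducible, aperiodic transition matrix $P$, reversible with respect to its stationary distribution $\pi$, started from $\pi$. Let $\lambda$ be the second largest eigenvalue of $P$, $\lambda_0=\max(0,\lambda)$, and let $f:E\to\mathbb R$ with $\min f(E)=0$, $\max f(E)=1$, $\mu=\mathbb E_\pi f(X_k)$, $S_n=\sum_{k=1}^nf(X_k)$. Let $D=\mathrm{diag}(\sqrt{\pi_i})$, $D_t=\mathrm{diag}(e^{tf(i)/2})$, $\gamma_1=(\sqrt{\pi_i})_{i\in E}$, $G_t=D_tDPD^{-1}D_t$, $H_t=D_t[\lambda_0I+(1-\lambda_0)\gamma_1\gamma_1']D_t$, and let $\zeta(t)$ and $\eta(t)$ be the largest eigenvalues of $G_t$ and $H_t$ respectively. Then for every $\varepsilon>0$, $n\ge1$ and $t\ge0$, $$\mathbb P_\pi[S_n\ge n(\mu+\varepsilon)]\le\|D_t\gamma_1\|^2\zeta(t)^{-1}\exp\{-n[t(\mu+\varepsilon)-\log\zeta(t)]\}\le\|D_t\gamma_1\|^2\eta(t)^{-1}\exp\{-n[t(\mu+\varepsilon)-\log\eta(t)]\},$$ and furthermore $$\mathbb P_\pi[S_n\ge n(\mu+\varepsilon)]\le\exp\{-n[t(\mu+\varepsilon)-\log\eta(t)]\}.$$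
   Context: Reversibility means $\pi_ip_{ij}=\pi_jp_{ji}$ for all $i,j$; then all eigenvalues of $P$ are real, listed as $1=\lambda_1>\lambda_2\ge\cdots$ with multiplicity, and the second largest eigenvalue is $\lambda=\lambda_2$. Diagonal matrices and vectors are indexed by the states of $E$ in a fixed order. $\|\cdot\|$ is the Euclidean norm. Note $DPD^{-1}$ is symmetric, so $G_t$ and $H_t$ are symmetric. *)

theory Defs
  imports "HOL-Analysis.Analysis"
begin

text \<open>Finite state space = finite type 's; a transition matrix is P :: real^'s^'s with
  P $ i $ j = p_ij. Distributions / functions on E are functions 's \<Rightarrow> real.\<close>

primrec mpow :: "real^'s^'s \<Rightarrow> nat \<Rightarrow> real^'s^'s" where
  "mpow P 0 = mat 1"
| "mpow P (Suc n) = mpow P n ** P"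

definition stochastic :: "real^'s::finite^'s \<Rightarrow> bool" where
  "stochastic P \<longleftrightarrow> (\<forall>i j. P $ i $ j \<ge> 0) \<and> (\<forall>i. (\<Sum>j\<in>UNIV. P $ i $ j) = 1)"

definition irreducible_mc :: "real^'s::finite^'s \<Rightarrow> bool" where
  "irreducible_mc P \<longleftrightarrow> (\<forall>i j. \<exists>n. mpow P n $ i $ j > 0)"

definition aperiodic_mc :: "real^'s::finite^'s \<Rightarrow> bool" where
  "aperiodic_mc P \<longleftrightarrow> (\<forall>i. Gcd {n::nat. n > 0 \<and> mpow P n $ i $ i > 0} = 1)"

definition stationary_dist :: "real^'s::finite^'s \<Rightarrow> ('s \<Rightarrow> real) \<Rightarrow> bool" where
  "stationary_dist P \<pi> \<longleftrightarrow> (\<forall>i. \<pi> i \<ge> 0) \<and> (\<Sum>i\<in>UNIV. \<pi> i) = 1 \<and>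
     (\<forall>j. (\<Sum>i\<in>UNIV. \<pi> i * P $ i $ j) = \<pi> j)"

definition reversible_mc :: "real^'s::finite^'s \<Rightarrow> ('s \<Rightarrow> real) \<Rightarrow> bool" where
  "reversible_mc P \<pi> \<longleftrightarrow> (\<forall>i j. \<pi> i * P $ i $ j = \<pi> j * P $ j $ i)"

text \<open>Eigenvalues (real) of a real matrix acting on column vectors.\<close>
definition eigvals :: "real^'s::finite^'s \<Rightarrow> real set" where
  "eigvals A = {l. \<exists>v. v \<noteq> 0 \<and> A *v v = l *\<^sub>R v}"

definition largest_eig :: "real^'s::finite^'s \<Rightarrow> real" where
  "largest_eig A = Max (eigvals A)"

text \<open>Second largest eigenvalue counted with multiplicity, for a diagonalizable matrix
  (P reversible is similar to a symmetric matrix): the largest eigenvalue l such that the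
  eigenvectors with eigenvalues \<ge> l span a space of dimension at least 2.\<close>
definition second_eig :: "real^'s::finite^'s \<Rightarrow> real" where
  "second_eig A = Max {l \<in> eigvals A.
      dim (span {v. \<exists>m \<ge> l. A *v v = m *\<^sub>R v}) \<ge> 2}"

definition diagm :: "('s::finite \<Rightarrow> real) \<Rightarrow> real^'s^'s" where
  "diagm d = (\<chi> i j. if i = j then d i else 0)"

text \<open>Law of the chain (X_0,...,X_n) started from \<pi>: probability of an event on paths,
  paths being lists of length n+1 (xs ! k = X_k).\<close>
definition path_prob :: "real^'s::finite^'s \<Rightarrow> ('s \<Rightarrow> real) \<Rightarrow> nat \<Rightarrow> ('s list \<Rightarrow> bool) \<Rightarrow> real" where
  "path_prob P \<pi> n A = (\<Sum>xs\<in>{xs. length xs = Suc n}.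
     if A xs then \<pi> (xs ! 0) * (\<Prod>k<n. P $ (xs ! k) $ (xs ! Suc k)) else 0)"

end

theory Submission
  imports Defs
begin


definition symm :: "real^'n::finite^'n \<Rightarrow> bool" where
  "symm M \<longleftrightarrow> (\<forall>i j. M$i$j = M$j$i)"

lemma symm_dot:
  assumes "symm M" shows "(M *v x) \<bullet> y = x \<bullet> (M *v y)"
proof -
  have "(M *v x) \<bullet> y = (\<Sum>i\<in>UNIV. \<Sum>j\<in>UNIV. M$i$j * x$j * y$i)"
    by (simp add: inner_vec_def matrix_vector_mult_def sum_distrib_right)
  also have "\<dots> = (\<Sum>j\<in>UNIV. \<Sum>i\<in>UNIV. M$i$j * x$j * y$i)" by (rule sum.swap)
  also have "\<dots> = x \<bullet> (M *v y)"
    using assms by (simp add: symm_def inner_vec_def matrix_vector_mult_def sum_distrib_left mult_ac)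
  finally show ?thesis .
qed

lemma quad_scale: fixes M :: "real^'n::finite^'n" shows "(c *\<^sub>R x) \<bullet> (M *v (c *\<^sub>R x)) = c^2 * (x \<bullet> (M *v x))"
  by (simp only: matrix_vector_mult_scaleR inner_scaleR_left inner_scaleR_right) (simp add: power2_eq_square)

lemma lin_coeff_zero:
  fixes a b :: real
  assumes "\<And>r. 2*r*a + r^2*b \<le> 0" shows "a = 0"
proof -
  define k where "k = 1 / (\<bar>b\<bar>+1)"
  have kpos: "k > 0" unfolding k_def by simp
  have "k * \<bar>b\<bar> < 1" unfolding k_def by (simp add: field_simps)
  moreover have "\<bar>k*b\<bar> = k*\<bar>b\<bar>" using kpos by (simp add: abs_mult)
  ultimately have kb: "2 + k*b > 0" using abs_ge_minus_self[of "k*b"] by linarith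
  have "2*(a*k)*a + (a*k)^2*b \<le> 0" by (rule assms)
  moreover have "2*(a*k)*a + (a*k)^2*b = a^2 * (k * (2 + k*b))"
    by (simp add: power2_eq_square algebra_simps)
  ultimately have "a^2 * (k * (2 + k*b)) \<le> 0" by simp
  moreover have "k * (2 + k*b) > 0" using kpos kb by simp
  ultimately show ?thesis by (metis mult_le_0_iff not_less zero_less_power2 power_eq_0_iff)
qed

lemma rayleigh_max:
  fixes M :: "real^'n::finite^'n" and S :: "(real^'n) set"
  assumes sym: "symm M" and sub: "subspace S" and ne: "\<exists>x\<in>S. x \<noteq> 0"
    and inv: "\<forall>x\<in>S. M *v x \<in> S"
  shows "\<exists>u\<in>S. norm u = 1 \<and> M *v u = (u \<bullet> (M *v u)) *\<^sub>R u \<and>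
     (\<forall>x\<in>S. x \<bullet> (M *v x) \<le> (u \<bullet> (M *v u)) * (norm x)^2)"
proof -
  define q where "q x = x \<bullet> (M *v x)" for x
  define K where "K = S \<inter> sphere 0 1"
  have "compact K" unfolding K_def using closed_subspace[OF sub] by (intro closed_Int_compact) auto
  moreover have "K \<noteq> {}"
  proof -
    obtain x where "x \<in> S" "x \<noteq> 0" using ne by blast
    hence "(1/norm x) *\<^sub>R x \<in> K" unfolding K_def using sub by (simp add: subspace_scale)
    thus ?thesis by blast
  qed
  moreover have "continuous_on K q" unfolding q_def
    by (intro continuous_intros linear_continuous_on) (simp add: linear_conv_bounded_linear)
  ultimately obtain u where uK: "u \<in> K" and umax: "\<forall>y\<in>K. q y \<le> q u"
    using continuous_attains_sup by blast
  define R where "R = q u"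
  have uS: "u \<in> S" and un: "norm u = 1" using uK by (auto simp: K_def)
  have uu: "u \<bullet> u = 1" by (metis un power2_norm_eq_inner one_power2)
  have hom: "q x \<le> R * (norm x)^2" if "x \<in> S" for x
  proof (cases "x = 0")
    case True thus ?thesis by (simp add: q_def)
  next
    case False
    let ?y = "(1/norm x) *\<^sub>R x"
    have "?y \<in> K" unfolding K_def using that False sub by (simp add: subspace_scale)
    hence "q ?y \<le> R" using umax R_def by simp
    moreover have "q ?y = q x / (norm x)^2" unfolding q_def quad_scale by (simp add: power_divide)
    ultimately show ?thesis using False by (simp add: divide_le_eq mult.commute)
  qed
  have perp: "w \<bullet> (M *v u - R *\<^sub>R u) = 0" if wS: "w \<in> S" for w
  proof -
    define a where "a = w \<bullet> (M *v u) - R * (u \<bullet> w)"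
    define b where "b = q w - R * (norm w)^2"
    have "2*r*a + r^2*b \<le> 0" for r
    proof -
      have "u + r *\<^sub>R w \<in> S" using uS wS sub by (simp add: subspace_add subspace_scale)
      hence "q (u + r *\<^sub>R w) \<le> R * (norm (u + r *\<^sub>R w))^2" by (rule hom)
      moreover have "q (u + r *\<^sub>R w) = R + 2*r*(w \<bullet> (M *v u)) + r^2 * q w"
        using symm_dot[OF sym, of u w]
        by (simp add: q_def R_def matrix_vector_right_distrib matrix_vector_mult_scaleR
            inner_add_left inner_add_right power2_eq_square inner_commute algebra_simps)
      moreover have "(norm (u + r *\<^sub>R w))^2 = 1 + 2*r*(u \<bullet> w) + r^2 * (norm w)^2"
        using uu by (simp only: power2_norm_eq_inner) (simp add: inner_add_left inner_add_right
            power2_eq_square inner_commute algebra_simps)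
      ultimately show ?thesis unfolding a_def b_def by (simp add: algebra_simps)
    qed
    hence "a = 0" by (rule lin_coeff_zero)
    thus ?thesis unfolding a_def by (simp add: inner_diff_right inner_commute)
  qed
  define w where "w = M *v u - R *\<^sub>R u"
  have "w \<in> S" unfolding w_def using uS inv sub by (simp add: subspace_diff subspace_scale)
  hence "w \<bullet> w = 0" using perp w_def by simp
  hence "w = 0" by simp
  hence "M *v u = R *\<^sub>R u" unfolding w_def by simp
  thus ?thesis using uS un hom unfolding R_def q_def by blast
qed


lemma eig_finite:
  fixes M :: "real^'n::finite^'n"
  assumes sym: "symm M" shows "finite (eigvals M)"
proof (rule ccontr)
  assume inf: "infinite (eigvals M)"
  obtain F where F: "F \<subseteq> eigvals M" "finite F" "card F = Suc CARD('n)"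
    using infinite_arbitrarily_large[OF inf] by blast
  define v where "v l = (SOME v. v \<noteq> 0 \<and> M *v v = l *\<^sub>R v)" for l
  have vp: "v l \<noteq> 0 \<and> M *v v l = l *\<^sub>R v l" if "l \<in> eigvals M" for l
  proof -
    from that obtain w where "w \<noteq> 0 \<and> M *v w = l *\<^sub>R w" unfolding eigvals_def by blast
    thus ?thesis unfolding v_def by (rule someI)
  qed
  have orth: "v l1 \<bullet> v l2 = 0" if "l1 \<in> eigvals M" "l2 \<in> eigvals M" "l1 \<noteq> l2" for l1 l2
  proof -
    have a: "M *v v l1 = l1 *\<^sub>R v l1" using vp[OF that(1)] by blast
    have b: "M *v v l2 = l2 *\<^sub>R v l2" using vp[OF that(2)] by blast
    have "(M *v v l1) \<bullet> v l2 = v l1 \<bullet> (M *v v l2)" by (rule symm_dot[OF sym])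
    hence "(l1 *\<^sub>R v l1) \<bullet> v l2 = v l1 \<bullet> (l2 *\<^sub>R v l2)" by (simp only: a b)
    hence "l1 * (v l1 \<bullet> v l2) = l2 * (v l1 \<bullet> v l2)" by (simp only: inner_scaleR_left inner_scaleR_right)
    thus ?thesis using that(3) by simp
  qed
  have inj: "inj_on v F"
  proof (rule inj_onI)
    fix l1 l2
    assume "l1 \<in> F" "l2 \<in> F" and e: "v l1 = v l2"
    hence h1: "v l1 \<noteq> 0" "M *v v l1 = l1 *\<^sub>R v l1" "M *v v l1 = l2 *\<^sub>R v l1"
      using vp[of l1] vp[of l2] F(1) by auto
    hence "l1 *\<^sub>R v l1 = l2 *\<^sub>R v l1" by simp
    thus "l1 = l2" using h1(1) by simp
  qed
  have "independent (v ` F)"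
  proof (rule pairwise_orthogonal_independent)
    show "pairwise orthogonal (v ` F)"
      unfolding pairwise_def orthogonal_def
    proof (intro ballI impI)
      fix x y assume "x \<in> v ` F" "y \<in> v ` F" "x \<noteq> y"
      then obtain l1 l2 where "l1 \<in> F" "l2 \<in> F" "x = v l1" "y = v l2" "l1 \<noteq> l2" by blast
      thus "x \<bullet> y = 0" using orth F(1) by blast
    qed
    show "0 \<notin> v ` F"
    proof
      assume "0 \<in> v ` F"
      then obtain l where "l \<in> F" "v l = 0" by force
      thus False using vp[of l] F(1) by blast
    qed
  qed
  from independent_bound[OF this] have "card (v ` F) \<le> CARD('n)" by simp
  moreover have "card (v ` F) = card F" using inj by (rule card_image)
  ultimately show False using F(3) by simp
qed

lemma largest_eig_props:
  fixes M :: "real^'n::finite^'n"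
  assumes sym: "symm M"
  shows "\<forall>x. x \<bullet> (M *v x) \<le> largest_eig M * (norm x)^2"
    and "\<exists>u. norm u = 1 \<and> u \<bullet> (M *v u) = largest_eig M"
proof -
  obtain i :: 'n where True by blast
  have "axis i (1::real) \<noteq> 0" by (simp add: axis_eq_0_iff)
  hence "\<exists>x\<in>(UNIV::(real^'n) set). x \<noteq> 0" by blast
  from rayleigh_max[OF sym subspace_UNIV this]
  obtain u where un: "norm u = 1" and ueig: "M *v u = (u \<bullet> (M *v u)) *\<^sub>R u"
    and ub: "\<forall>x. x \<bullet> (M *v x) \<le> (u \<bullet> (M *v u)) * (norm x)^2" by blast
  define R where "R = u \<bullet> (M *v u)"
  have u0: "u \<noteq> 0" using un by auto
  have "R \<in> eigvals M" unfolding eigvals_def mem_Collect_eq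
    using u0 ueig unfolding R_def[symmetric] by blast
  moreover have "e \<le> R" if "e \<in> eigvals M" for e
  proof -
    from that obtain v where "v \<noteq> 0 \<and> M *v v = e *\<^sub>R v" unfolding eigvals_def by blast
    hence v: "v \<noteq> 0" "M *v v = e *\<^sub>R v" by auto
    have "v \<bullet> (M *v v) = e * (v \<bullet> v)" unfolding v(2) by (rule inner_scaleR_right)
    also have "\<dots> = e * (norm v)^2" by (simp only: power2_norm_eq_inner)
    finally have 1: "v \<bullet> (M *v v) = e * (norm v)^2" .
    have 2: "v \<bullet> (M *v v) \<le> R * (norm v)^2" using ub unfolding R_def by blast
    have 3: "(norm v)^2 > 0" using v by simp
    show ?thesis using 1 2 3 by (metis mult_le_cancel_right_pos)
  qed
  ultimately have lR: "largest_eig M = R" unfolding largest_eig_def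
    by (rule Max_eqI[OF eig_finite[OF sym], rotated]) blast
  show "\<forall>x. x \<bullet> (M *v x) \<le> largest_eig M * (norm x)^2"
    using ub unfolding lR R_def by blast
  show "\<exists>u. norm u = 1 \<and> u \<bullet> (M *v u) = largest_eig M"
    using un unfolding lR R_def by blast
qed

lemma symm_norm_bound:
  fixes M :: "real^'n::finite^'n"
  assumes sym: "symm M" and b: "\<And>x. \<bar>x \<bullet> (M *v x)\<bar> \<le> z * (norm x)^2"
  shows "norm (M *v x) \<le> z * norm x"
proof (cases "M *v x = 0")
  case True
  have "0 \<le> z * (norm x)^2" using b[of x] by linarith
  hence h0: "0 \<le> (z * norm x) * norm x" by (simp add: power2_eq_square mult.assoc)
  have "0 \<le> z * norm x"
  proof (cases "x = 0")
    case False
    hence "norm x > 0" by simp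
    thus ?thesis using h0 by (simp add: zero_le_mult_iff)
  qed simp
  thus ?thesis using True by simp
next
  case False
  define y where "y = M *v x"
  have ny: "norm y > 0" using False y_def by simp
  have xy: "x \<bullet> (M *v y) = y \<bullet> y" using symm_dot[OF sym, of x y] y_def by (simp add: inner_commute)
  have key: "4*r*(y \<bullet> y) \<le> 2*z*((norm x)^2 + r^2*(norm y)^2)" for r
  proof -
    have e1: "(x + r *\<^sub>R y) \<bullet> (M *v (x + r *\<^sub>R y)) - (x - r *\<^sub>R y) \<bullet> (M *v (x - r *\<^sub>R y))
        = 4*r*(y \<bullet> y)"
    proof -
      have "(x + r *\<^sub>R y) \<bullet> (M *v (x + r *\<^sub>R y)) - (x - r *\<^sub>R y) \<bullet> (M *v (x - r *\<^sub>R y))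
        = 2*r*(x \<bullet> (M *v y) + y \<bullet> (M *v x))"
        by (simp add: matrix_vector_right_distrib matrix_vector_mult_diff_distrib matrix_vector_mult_scaleR
            inner_add_left inner_add_right inner_diff_left inner_diff_right algebra_simps)
      thus ?thesis using xy y_def by (simp add: inner_commute)
    qed
    have e2: "(norm (x + r *\<^sub>R y))^2 + (norm (x - r *\<^sub>R y))^2 = 2*((norm x)^2 + r^2*(norm y)^2)"
      by (simp only: power2_norm_eq_inner)
        (simp add: inner_add_left inner_add_right inner_diff_left inner_diff_right
          algebra_simps power2_eq_square)
    have "(x + r *\<^sub>R y) \<bullet> (M *v (x + r *\<^sub>R y)) \<le> z * (norm (x + r *\<^sub>R y))^2"
      using b by (metis abs_le_D1)
    moreover have "-((x - r *\<^sub>R y) \<bullet> (M *v (x - r *\<^sub>R y))) \<le> z * (norm (x - r *\<^sub>R y))^2"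
      using b by (metis abs_le_D2)
    ultimately have "4*r*(y \<bullet> y) \<le> z * (norm (x + r *\<^sub>R y))^2 + z * (norm (x - r *\<^sub>R y))^2"
      using e1 by linarith
    also have "\<dots> = z * ((norm (x + r *\<^sub>R y))^2 + (norm (x - r *\<^sub>R y))^2)" by (simp only: distrib_left)
    also have "\<dots> = 2*z*((norm x)^2 + r^2*(norm y)^2)" unfolding e2 by simp
    finally show ?thesis .
  qed
  have "x \<noteq> 0" using False by auto
  hence nx: "norm x > 0" by simp
  from key[of "norm x / norm y"]
  have "4*(norm x / norm y)*(norm y)^2 \<le> 2*z*((norm x)^2 + (norm x)^2)"
    using ny by (simp add: power2_norm_eq_inner[symmetric] power_divide)
  hence "4*(norm x * norm y) \<le> 4*z*(norm x)^2" using ny by (simp add: power2_eq_square field_simps)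
  hence "norm x * norm y \<le> norm x * (z * norm x)" by (simp add: power2_eq_square algebra_simps)
  hence "norm y \<le> z * norm x" using nx by simp
  thus ?thesis using y_def by simp
qed



lemma vec_eqI: "(\<And>i. x $ i = y $ i) \<Longrightarrow> x = y"
  by (simp add: vec_eq_iff)


lemma mpow_nonneg:
  assumes "stochastic P" shows "mpow P n $ i $ j \<ge> 0"
proof (induction n arbitrary: i j)
  case 0 thus ?case by (simp add: mat_def)
next
  case (Suc n)
  thus ?case using assms unfolding stochastic_def
    by (simp add: matrix_matrix_mult_def sum_nonneg)
qed

lemma mpow_stationary:
  assumes "stationary_dist P \<pi>"
  shows "(\<Sum>i\<in>UNIV. \<pi> i * mpow P n $ i $ j) = \<pi> j"
proof (induction n arbitrary: j)
  case 0
  have "(\<Sum>i\<in>UNIV. \<pi> i * mpow P 0 $ i $ j) = (\<Sum>i\<in>UNIV. if i = j then \<pi> j else 0)"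
    by (rule sum.cong) (auto simp: mat_def)
  thus ?case by simp
next
  case (Suc n)
  have "(\<Sum>i\<in>UNIV. \<pi> i * mpow P (Suc n) $ i $ j)
      = (\<Sum>i\<in>UNIV. \<Sum>k\<in>UNIV. \<pi> i * mpow P n $ i $ k * P $ k $ j)"
    by (simp add: matrix_matrix_mult_def sum_distrib_left mult.assoc)
  also have "\<dots> = (\<Sum>k\<in>UNIV. \<Sum>i\<in>UNIV. \<pi> i * mpow P n $ i $ k * P $ k $ j)"
    by (rule sum.swap)
  also have "\<dots> = (\<Sum>k\<in>UNIV. \<pi> k * P $ k $ j)"
    using Suc by (simp add: sum_distrib_right[symmetric])
  also have "\<dots> = \<pi> j" using assms unfolding stationary_dist_def by blast
  finally show ?case .
qed

lemma pi_pos: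
  assumes st: "stochastic P" and irr: "irreducible_mc P" and sd: "stationary_dist P \<pi>"
  shows "\<pi> j > 0"
proof -
  have nn: "\<forall>i. \<pi> i \<ge> 0" and s1: "(\<Sum>i\<in>UNIV. \<pi> i) = 1" using sd unfolding stationary_dist_def by auto
  obtain i0 where i0: "\<pi> i0 > 0"
  proof (rule ccontr)
    assume "\<not> thesis"
    hence "\<forall>i. \<pi> i = 0" using nn that by (meson antisym not_le)
    thus False using s1 by simp
  qed
  obtain n where n: "mpow P n $ i0 $ j > 0" using irr unfolding irreducible_mc_def by blast
  have "\<pi> i0 * mpow P n $ i0 $ j \<le> (\<Sum>i\<in>UNIV. \<pi> i * mpow P n $ i $ j)"
    by (rule member_le_sum) (auto intro: mult_nonneg_nonneg nn[rule_format] mpow_nonneg[OF st])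
  also have "\<dots> = \<pi> j" by (rule mpow_stationary[OF sd])
  finally show ?thesis using i0 n by (smt (verit) mult_pos_pos)
qed

lemma diag_mult_left: "(diagm d ** M) $ i $ j = d i * M $ i $ j"
proof -
  have "(diagm d ** M) $ i $ j = (\<Sum>k\<in>UNIV. (if i = k then d i else 0) * M $ k $ j)"
    by (simp add: diagm_def matrix_matrix_mult_def)
  also have "\<dots> = (\<Sum>k\<in>UNIV. if k = i then d i * M $ i $ j else 0)" by (rule sum.cong) auto
  also have "\<dots> = d i * M $ i $ j" by simp
  finally show ?thesis .
qed

lemma diag_mult_right: "(M ** diagm d) $ i $ j = M $ i $ j * d j"
proof -
  have "(M ** diagm d) $ i $ j = (\<Sum>k\<in>UNIV. M $ i $ k * (if k = j then d k else 0))"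
    by (simp add: diagm_def matrix_matrix_mult_def)
  also have "\<dots> = (\<Sum>k\<in>UNIV. if k = j then M $ i $ j * d j else 0)" by (rule sum.cong) auto
  also have "\<dots> = M $ i $ j * d j" by simp
  finally show ?thesis .
qed

lemma diag_vec: "(diagm d *v x) $ i = d i * x $ i"
proof -
  have "(diagm d *v x) $ i = (\<Sum>k\<in>UNIV. (if i = k then d i else 0) * x $ k)"
    by (simp add: diagm_def matrix_vector_mult_def)
  also have "\<dots> = (\<Sum>k\<in>UNIV. if k = i then d i * x $ i else 0)" by (rule sum.cong) auto
  also have "\<dots> = d i * x $ i" by simp
  finally show ?thesis .
qed

lemma diag_diag: "diagm d ** diagm d' = diagm (\<lambda>i. d i * d' i)"
  by (simp add: vec_eq_iff diag_mult_left) (simp add: diagm_def)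

lemma diag_inv:
  assumes "\<forall>i. d i \<noteq> 0"
  shows "matrix_inv (diagm d) = diagm (\<lambda>i. 1 / d i)"
proof -
  let ?B = "diagm (\<lambda>i. 1 / d i)"
  have 1: "diagm d ** ?B = mat 1" "?B ** diagm d = mat 1"
    using assms by (simp_all add: diag_diag) (simp_all add: diagm_def mat_def)
  hence ex: "\<exists>A'. diagm d ** A' = mat 1 \<and> A' ** diagm d = mat 1" by blast
  define A' where "A' = matrix_inv (diagm d)"
  have A': "diagm d ** A' = mat 1 \<and> A' ** diagm d = mat 1"
    unfolding A'_def matrix_inv_def by (rule someI_ex[OF ex])
  have "A' = A' ** (diagm d ** ?B)" using 1 by (simp add: matrix_mul_rid)
  also have "\<dots> = (A' ** diagm d) ** ?B" by (simp add: matrix_mul_assoc)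
  also have "\<dots> = ?B" using A' by (simp add: matrix_mul_lid)
  finally show ?thesis unfolding A'_def .
qed

primrec vv :: "('s \<Rightarrow> 's \<Rightarrow> real) \<Rightarrow> nat \<Rightarrow> 's \<Rightarrow> real" where
  "vv Q 0 i = 1"
| "vv Q (Suc n) i = (\<Sum>j\<in>UNIV. Q i j * vv Q n j)"

lemma path_sum:
  fixes Q :: "'s::finite \<Rightarrow> 's \<Rightarrow> real"
  shows "(\<Sum>xs\<in>{xs. length xs = Suc n}. h (xs!0) * (\<Prod>k<n. Q (xs!k) (xs!Suc k)))
       = (\<Sum>i\<in>UNIV. h i * vv Q n i)"
proof (induction n arbitrary: h)
  case 0
  have "{xs::'s list. length xs = Suc 0} = (\<lambda>x. [x]) ` UNIV"
    by (auto simp: length_Suc_conv)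
  moreover have "inj (\<lambda>x::'s. [x])" by (auto simp: inj_def)
  ultimately show ?case by (simp add: sum.reindex)
next
  case (Suc n)
  have seteq: "{xs::'s list. length xs = Suc (Suc n)} = (\<lambda>(x,ys). x # ys) ` (UNIV \<times> {ys. length ys = Suc n})"
    by (auto simp: length_Suc_conv image_iff)
  have inj: "inj_on (\<lambda>(x::'s,ys). x # ys) (UNIV \<times> {ys. length ys = Suc n})"
    by (auto simp: inj_on_def)
  have "(\<Sum>xs\<in>{xs. length xs = Suc (Suc n)}. h (xs!0) * (\<Prod>k<Suc n. Q (xs!k) (xs!Suc k)))
     = (\<Sum>(x,ys)\<in>UNIV \<times> {ys. length ys = Suc n}. h x * (Q x (ys!0) * (\<Prod>k<n. Q (ys!k) (ys!Suc k))))"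
    unfolding seteq sum.reindex[OF inj]
    by (rule sum.cong) (auto simp: prod.lessThan_Suc_shift simp del: prod.lessThan_Suc)
  also have "\<dots> = (\<Sum>x\<in>UNIV. \<Sum>ys\<in>{ys. length ys = Suc n}. h x * (Q x (ys!0) * (\<Prod>k<n. Q (ys!k) (ys!Suc k))))"
    by (rule sum.cartesian_product[symmetric])
  also have "\<dots> = (\<Sum>x\<in>UNIV. h x * (\<Sum>ys\<in>{ys. length ys = Suc n}. Q x (ys!0) * (\<Prod>k<n. Q (ys!k) (ys!Suc k))))"
    by (simp add: sum_distrib_left)
  also have "\<dots> = (\<Sum>x\<in>UNIV. h x * vv Q (Suc n) x)"
    using Suc[of "Q _"] by simp
  finally show ?case .
qed


lemma chernoff:
  fixes P :: "real^'s::finite^'s"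
  assumes st: "stochastic P" and nn: "\<forall>i. \<pi> i \<ge> 0" and t: "t \<ge> 0"
  shows "path_prob P \<pi> n (\<lambda>xs. (\<Sum>k=1..n. f (xs!k)) \<ge> a)
     \<le> exp (-(t*a)) * (\<Sum>i\<in>UNIV. \<pi> i * vv (\<lambda>i j. P$i$j * exp (t * f j)) n i)"
proof -
  define w where "w xs = \<pi> (xs!0) * (\<Prod>k<n. P $ (xs!k) $ (xs!Suc k))" for xs :: "'s list"
  define S where "S xs = (\<Sum>k=1..n. f (xs!k))" for xs :: "'s list"
  have wnn: "w xs \<ge> 0" for xs unfolding w_def using nn st unfolding stochastic_def
    by (intro mult_nonneg_nonneg prod_nonneg) auto
  have "path_prob P \<pi> n (\<lambda>xs. S xs \<ge> a) = (\<Sum>xs\<in>{xs. length xs = Suc n}. if S xs \<ge> a then w xs else 0)"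
    unfolding path_prob_def w_def by simp
  also have "\<dots> \<le> (\<Sum>xs\<in>{xs. length xs = Suc n}. w xs * exp (t * (S xs - a)))"
  proof (rule sum_mono)
    fix xs
    show "(if S xs \<ge> a then w xs else 0) \<le> w xs * exp (t * (S xs - a))"
    proof (cases "S xs \<ge> a")
      case True
      hence "t * (S xs - a) \<ge> 0" using t by simp
      hence "exp (t * (S xs - a)) \<ge> 1" by simp
      thus ?thesis using True wnn[of xs] by (simp add: mult_le_cancel_left1)
    qed (simp add: wnn)
  qed
  also have "\<dots> = (\<Sum>xs\<in>{xs. length xs = Suc n}. exp (-(t*a)) * (\<pi> (xs!0) * (\<Prod>k<n. P$(xs!k)$(xs!Suc k) * exp (t * f (xs!Suc k)))))"
  proof (rule sum.cong)
    fix xs :: "'s list"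
    have "S xs = (\<Sum>k<n. f (xs!Suc k))" unfolding S_def by (simp add: sum.atLeast1_atMost_eq)
    hence "exp (t * S xs) = (\<Prod>k<n. exp (t * f (xs!Suc k)))" by (simp add: sum_distrib_left exp_sum)
    moreover have "exp (t * (S xs - a)) = exp (-(t*a)) * exp (t * S xs)"
      by (simp add: right_diff_distrib exp_diff exp_minus field_simps)
    ultimately show "w xs * exp (t * (S xs - a)) = exp (-(t*a)) * (\<pi> (xs!0) * (\<Prod>k<n. P$(xs!k)$(xs!Suc k) * exp (t * f (xs!Suc k))))"
      unfolding w_def by (simp add: prod.distrib)
  qed simp
  also have "\<dots> = exp (-(t*a)) * (\<Sum>i\<in>UNIV. \<pi> i * vv (\<lambda>i j. P$i$j * exp (t * f j)) n i)"
    by (simp add: sum_distrib_left[symmetric] path_sum[of \<pi> "\<lambda>i j. P$i$j * exp (t * f j)" n])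
  finally show ?thesis unfolding S_def .
qed

lemma quad_sum: "x \<bullet> (M *v x) = (\<Sum>i\<in>UNIV. \<Sum>j\<in>UNIV. x$i * M$i$j * x$j)"
  by (simp add: inner_vec_def matrix_vector_mult_def sum_distrib_left mult_ac)

lemma norm_sq_sum: "(norm (x::real^'n::finite))^2 = (\<Sum>i\<in>UNIV. (x$i)^2)"
  by (simp only: power2_norm_eq_inner inner_vec_def) (simp add: power2_eq_square)

lemma stoch_eig_le1:
  fixes P :: "real^'s::finite^'s"
  assumes st: "stochastic P" and ev: "P *v w = R *\<^sub>R w" and w0: "w \<noteq> 0"
  shows "R \<le> 1"
proof -
  define m where "m = Max (range (\<lambda>j. \<bar>w$j\<bar>))"
  have "m \<in> range (\<lambda>j. \<bar>w$j\<bar>)" unfolding m_def by (rule Max_in) auto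
  then obtain i where mi: "m = \<bar>w$i\<bar>" by blast
  have le: "\<bar>w$j\<bar> \<le> \<bar>w$i\<bar>" for j unfolding mi[symmetric] m_def by (rule Max_ge) auto
  obtain j0 where "w$j0 \<noteq> 0" using w0 by (metis vec_eq_iff zero_index)
  hence pos: "\<bar>w$i\<bar> > 0" using le[of j0] by simp
  have "R * w$i = (P *v w)$i" using ev by simp
  also have "\<dots> = (\<Sum>j\<in>UNIV. P$i$j * w$j)" by (simp add: matrix_vector_mult_def)
  finally have "\<bar>R\<bar> * \<bar>w$i\<bar> = \<bar>\<Sum>j\<in>UNIV. P$i$j * w$j\<bar>" by (metis abs_mult)
  also have "\<dots> \<le> (\<Sum>j\<in>UNIV. \<bar>P$i$j * w$j\<bar>)" by (rule sum_abs)
  also have "\<dots> \<le> (\<Sum>j\<in>UNIV. P$i$j * \<bar>w$i\<bar>)"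
    using st le unfolding stochastic_def by (intro sum_mono) (simp add: abs_mult mult_left_mono)
  also have "\<dots> = \<bar>w$i\<bar>" using st unfolding stochastic_def by (simp add: sum_distrib_right[symmetric])
  finally have "\<bar>R\<bar> * \<bar>w$i\<bar> \<le> 1 * \<bar>w$i\<bar>" by simp
  hence "\<bar>R\<bar> \<le> 1" using pos by (rule mult_right_le_imp_le)
  thus ?thesis by simp
qed


lemma A_bound:
  fixes P :: "real^'s::finite^'s" and \<pi> :: "'s \<Rightarrow> real"
  assumes st: "stochastic P" and pos: "\<forall>i. \<pi> i > 0" and s1: "(\<Sum>i\<in>UNIV. \<pi> i) = 1"
    and rev: "reversible_mc P \<pi>"
  defines "A \<equiv> (\<chi> i j. sqrt (\<pi> i) * P$i$j / sqrt (\<pi> j)) :: real^'s^'s"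
    and "\<gamma> \<equiv> (\<chi> i. sqrt (\<pi> i)) :: real^'s"
  shows "symm A" and "A *v \<gamma> = \<gamma>" and "\<gamma> \<bullet> \<gamma> = 1"
    and "y \<bullet> (A *v y) \<le> max 0 (second_eig P) * (norm y)^2 + (1 - max 0 (second_eig P)) * (\<gamma> \<bullet> y)^2"
proof -
  define s where "s i = sqrt (\<pi> i)" for i
  have spos: "s i > 0" for i unfolding s_def using pos by simp
  have sne: "s i \<noteq> 0" for i using spos[of i] by simp
  have ss: "s i * s i = \<pi> i" for i unfolding s_def using pos by (simp add: less_imp_le)
  have Aij: "A$i$j = s i * P$i$j / s j" for i j unfolding A_def s_def by simp
  have gi: "\<gamma>$i = s i" for i unfolding \<gamma>_def s_def by simp
  show sym: "symm A" unfolding symm_def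
  proof (intro allI)
    fix i j
    have "A$i$j = (\<pi> i * P$i$j) / (s i * s j)" unfolding Aij using spos[of i] spos[of j]
      by (simp add: ss[symmetric] field_simps)
    also have "\<dots> = (\<pi> j * P$j$i) / (s j * s i)" using rev unfolding reversible_mc_def by (simp add: mult.commute)
    also have "\<dots> = A$j$i" unfolding Aij using spos[of i] spos[of j]
      by (simp add: ss[symmetric] field_simps)
    finally show "A$i$j = A$j$i" .
  qed
  show Ag: "A *v \<gamma> = \<gamma>"
  proof (rule vec_eqI)
    fix i
    have "(A *v \<gamma>)$i = (\<Sum>j\<in>UNIV. s i * P$i$j)"
      unfolding matrix_vector_mult_def by (simp add: Aij gi sne)
    also have "\<dots> = s i" using st unfolding stochastic_def by (simp add: sum_distrib_left[symmetric])
    finally show "(A *v \<gamma>)$i = \<gamma>$i" by (simp add: gi)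
  qed
  show gg: "\<gamma> \<bullet> \<gamma> = 1" unfolding inner_vec_def using s1 by (simp add: gi ss)
  define l0 where "l0 = max 0 (second_eig P)"
  \<comment> \<open>finiteness of the eigenvalues of P\<close>
  have eigP: "eigvals P \<subseteq> eigvals A"
  proof
    fix l assume "l \<in> eigvals P"
    then obtain v where "v \<noteq> 0 \<and> P *v v = l *\<^sub>R v" unfolding eigvals_def by blast
    hence v: "v \<noteq> 0" "P *v v = l *\<^sub>R v" by auto
    define v' where "v' = (\<chi> i. s i * v$i)"
    have "v' \<noteq> 0"
    proof
      assume "v' = 0"
      hence "v'$i = 0" for i by simp
      hence "s i * v$i = 0" for i unfolding v'_def by simp
      hence "v$i = 0" for i using sne[of i] by (metis mult_eq_0_iff)
      thus False using v(1) by (simp add: vec_eq_iff)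
    qed
    moreover have "A *v v' = l *\<^sub>R v'"
    proof (rule vec_eqI)
      fix i
      have "(A *v v')$i = s i * (\<Sum>j\<in>UNIV. P$i$j * v$j)"
        unfolding matrix_vector_mult_def v'_def by (simp add: Aij sne sum_distrib_left mult_ac)
      also have "(\<Sum>j\<in>UNIV. P$i$j * v$j) = l * v$i"
      proof -
        have "(P *v v)$i = (l *\<^sub>R v)$i" using v(2) by simp
        thus ?thesis by (simp add: matrix_vector_mult_def)
      qed
      finally show "(A *v v')$i = (l *\<^sub>R v')$i" unfolding v'_def by simp
    qed
    ultimately show "l \<in> eigvals A" unfolding eigvals_def by blast
  qed
  have finP: "finite (eigvals P)" using eig_finite[OF sym] eigP finite_subset by blast
  \<comment> \<open>the bound on the orthogonal complement\<close>
  have zb: "z \<bullet> (A *v z) \<le> l0 * (norm z)^2" if zg: "\<gamma> \<bullet> z = 0" for z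
  proof (cases "z = 0")
    case True thus ?thesis by simp
  next
    case False
    define S where "S = {x. \<gamma> \<bullet> x = 0}"
    have subS: "subspace S" unfolding S_def using subspace_orthogonal_to_vector[of \<gamma>]
      by (simp add: orthogonal_def)
    have invS: "\<forall>x\<in>S. A *v x \<in> S"
      unfolding S_def using symm_dot[OF sym, of \<gamma>] Ag by auto
    have neS: "\<exists>x\<in>S. x \<noteq> 0" using False zg unfolding S_def by blast
    obtain u where uS: "u \<in> S" and un: "norm u = 1" and ue: "A *v u = (u \<bullet> (A *v u)) *\<^sub>R u"
      and ub: "\<forall>x\<in>S. x \<bullet> (A *v x) \<le> (u \<bullet> (A *v u)) * (norm x)^2"
      using rayleigh_max[OF sym subS neS invS] by blast
    define R where "R = u \<bullet> (A *v u)"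
    have zS: "z \<in> S" using zg unfolding S_def by simp
    have "R \<le> second_eig P"
    proof -
      define w where "w = (\<chi> i. u$i / s i)"
      define one :: "real^'s" where "one = (\<chi> i. 1)"
      have u0: "u \<noteq> 0" using un by auto
      have w0: "w \<noteq> 0"
      proof
        assume "w = 0"
        hence "w$i = 0" for i by simp
        hence "u$i / s i = 0" for i unfolding w_def by simp
        hence "u$i = 0" for i using sne[of i] by (metis divide_eq_0_iff)
        thus False using u0 by (simp add: vec_eq_iff)
      qed
      have Pw: "P *v w = R *\<^sub>R w"
      proof (rule vec_eqI)
        fix i
        have "(A *v u)$i = s i * (\<Sum>j\<in>UNIV. P$i$j * (u$j / s j))"
          unfolding matrix_vector_mult_def by (simp add: Aij sne sum_distrib_left mult_ac)
        moreover have "(A *v u)$i = R * u$i"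
        proof -
          have "(A *v u)$i = ((u \<bullet> (A *v u)) *\<^sub>R u)$i" using ue by simp
          thus ?thesis unfolding R_def by simp
        qed
        ultimately have "(\<Sum>j\<in>UNIV. P$i$j * (u$j / s j)) = R * (u$i / s i)"
          using spos[of i] by (simp add: field_simps)
        thus "(P *v w)$i = (R *\<^sub>R w)$i" unfolding w_def matrix_vector_mult_def by simp
      qed
      have R1: "R \<le> 1" by (rule stoch_eig_le1[OF st Pw w0])
      have Pone: "P *v one = 1 *\<^sub>R one"
        using st unfolding stochastic_def one_def by (simp add: vec_eq_iff matrix_vector_mult_def)
      have one0: "one \<noteq> 0" unfolding one_def by (simp add: vec_eq_iff)
      define X where "X = {v. \<exists>m\<ge>R. P *v v = m *\<^sub>R v}"
      have wX: "w \<in> X" "one \<in> X" unfolding X_def using Pw Pone R1 by auto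
      have wspan: "w \<notin> span {one}"
      proof
        assume "w \<in> span {one}"
        then obtain k where k: "w = k *\<^sub>R one" by (auto simp: span_singleton)
        have "u = k *\<^sub>R \<gamma>"
        proof (rule vec_eqI)
          fix i
          have "w$i = (k *\<^sub>R one)$i" using k by simp
          hence "u$i / s i = k" unfolding w_def one_def by simp
          thus "u$i = (k *\<^sub>R \<gamma>)$i" using spos[of i] by (simp add: gi field_simps)
        qed
        hence "\<gamma> \<bullet> u = k" using gg by simp
        hence "k = 0" using uS unfolding S_def by simp
        thus False using \<open>u = k *\<^sub>R \<gamma>\<close> u0 by simp
      qed
      have ind: "independent {w, one}"
        by (rule independent_insertI[OF wspan]) (rule independent_insertI, simp add: one0, rule independent_empty)
      have "one \<in> span {one}" by (rule span_base) simp
      hence "w \<noteq> one" using wspan by metis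
      hence "card {w, one} = 2" by simp
      moreover have "card {w, one} \<le> dim (span X)"
        using ind wX by (intro independent_card_le_dim) (auto intro: span_base)
      ultimately have dimX: "2 \<le> dim (span X)" by simp
      have Rev: "R \<in> eigvals P" unfolding eigvals_def using Pw w0 by blast
      have "R \<in> {l \<in> eigvals P. dim (span {v. \<exists>m \<ge> l. P *v v = m *\<^sub>R v}) \<ge> 2}"
        using Rev dimX unfolding X_def by simp
      moreover have "finite {l \<in> eigvals P. dim (span {v. \<exists>m \<ge> l. P *v v = m *\<^sub>R v}) \<ge> 2}"
        using finP by simp
      ultimately show ?thesis unfolding second_eig_def by (rule Max_ge[rotated])
    qed
    hence "R \<le> l0" unfolding l0_def by simp
    moreover have "z \<bullet> (A *v z) \<le> R * (norm z)^2" using ub zS unfolding R_def by blast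
    ultimately show ?thesis by (smt (verit) mult_right_mono zero_le_power2)
  qed
  define a where "a = \<gamma> \<bullet> y"
  define z where "z = y - a *\<^sub>R \<gamma>"
  have zg: "\<gamma> \<bullet> z = 0" unfolding z_def a_def using gg by (simp add: inner_diff_right)
  have y: "y = a *\<^sub>R \<gamma> + z" unfolding z_def by simp
  have gAz: "\<gamma> \<bullet> (A *v z) = 0" using symm_dot[OF sym, of \<gamma> z] Ag zg by simp
  have "y \<bullet> (A *v y) = (a *\<^sub>R \<gamma> + z) \<bullet> (a *\<^sub>R \<gamma> + A *v z)"
    unfolding y by (simp add: matrix_vector_right_distrib matrix_vector_mult_scaleR Ag)
  also have "\<dots> = a^2 + z \<bullet> (A *v z)"
    using gg gAz zg by (simp add: inner_add_left inner_add_right power2_eq_square inner_commute)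
  finally have yAy: "y \<bullet> (A *v y) = a^2 + z \<bullet> (A *v z)" .
  have "(norm y)^2 = (a *\<^sub>R \<gamma> + z) \<bullet> (a *\<^sub>R \<gamma> + z)" unfolding y by (simp only: power2_norm_eq_inner)
  also have "\<dots> = a^2 * (\<gamma> \<bullet> \<gamma>) + 2*a*(\<gamma> \<bullet> z) + z \<bullet> z"
    by (simp add: inner_add_left inner_add_right inner_commute power2_eq_square algebra_simps)
  also have "\<dots> = a^2 + (norm z)^2" using gg zg by (simp add: power2_norm_eq_inner)
  finally have ny: "(norm y)^2 = a^2 + (norm z)^2" .
  have "y \<bullet> (A *v y) \<le> a^2 + l0 * (norm z)^2" using yAy zb[OF zg] by simp
  also have "\<dots> = l0 * (norm y)^2 + (1 - l0) * a^2" unfolding ny by (simp add: algebra_simps)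
  finally show "y \<bullet> (A *v y) \<le> max 0 (second_eig P) * (norm y)^2 + (1 - max 0 (second_eig P)) * (\<gamma> \<bullet> y)^2"
    unfolding l0_def a_def .
qed

theorem proposition2:
  fixes P :: "real^'s::finite^'s" and \<pi> :: "'s \<Rightarrow> real" and f :: "'s \<Rightarrow> real"
    and \<epsilon> t :: real and n :: nat
  assumes "stochastic P" and "irreducible_mc P" and "aperiodic_mc P"
    and "stationary_dist P \<pi>" and "reversible_mc P \<pi>"
    and "Min (range f) = 0" and "Max (range f) = 1"
    and "\<epsilon> > 0" and "n \<ge> 1" and "t \<ge> 0"
  defines "lam0 \<equiv> max 0 (second_eig P)"
    and "\<mu> \<equiv> (\<Sum>i\<in>UNIV. \<pi> i * f i)"
    and "D \<equiv> diagm (\<lambda>i. sqrt (\<pi> i))"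
    and "Dt \<equiv> diagm (\<lambda>i. exp (t * f i / 2))"
    and "\<gamma>1 \<equiv> (\<chi> i. sqrt (\<pi> i)) :: real^'s"
  defines "pev \<equiv> path_prob P \<pi> n (\<lambda>xs. (\<Sum>k=1..n. f (xs ! k)) \<ge> real n * (\<mu> + \<epsilon>))"
    and "G \<equiv> Dt ** D ** P ** matrix_inv D ** Dt"
    and "H \<equiv> Dt ** (lam0 *\<^sub>R mat 1 + (1 - lam0) *\<^sub>R (\<chi> i j. \<gamma>1 $ i * \<gamma>1 $ j)) ** Dt"
  defines "\<zeta> \<equiv> largest_eig G" and "\<eta> \<equiv> largest_eig H"
  shows "pev \<le> (norm (Dt *v \<gamma>1))^2 / \<zeta> * exp (- real n * (t * (\<mu> + \<epsilon>) - ln \<zeta>))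
    \<and> (norm (Dt *v \<gamma>1))^2 / \<zeta> * exp (- real n * (t * (\<mu> + \<epsilon>) - ln \<zeta>))
        \<le> (norm (Dt *v \<gamma>1))^2 / \<eta> * exp (- real n * (t * (\<mu> + \<epsilon>) - ln \<eta>))
    \<and> pev \<le> exp (- real n * (t * (\<mu> + \<epsilon>) - ln \<eta>))"
proof -
  note defs = assms(11-20)
  have st: "stochastic P" and sd: "stationary_dist P \<pi>" and rev: "reversible_mc P \<pi>"
    using assms(1,4,5) by auto
  have nn: "\<forall>i. \<pi> i \<ge> 0" and s1: "(\<Sum>i\<in>UNIV. \<pi> i) = 1"
    using sd unfolding stationary_dist_def by auto
  have pos: "\<forall>i. \<pi> i > 0" using pi_pos[OF st assms(2) sd] by blast
  define s where "s i = sqrt (\<pi> i)" for i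
  define e where "e i = exp (t * f i / 2)" for i
  define l0 where "l0 = max 0 (second_eig P)"
  define A :: "real^'s^'s" where "A = (\<chi> i j. sqrt (\<pi> i) * P$i$j / sqrt (\<pi> j))"
  define \<gamma> :: "real^'s" where "\<gamma> = (\<chi> i. sqrt (\<pi> i))"
  note AB = A_bound[OF st pos s1 rev, folded A_def \<gamma>_def]
  have symA: "symm A" and Ag: "A *v \<gamma> = \<gamma>" and gg: "\<gamma> \<bullet> \<gamma> = 1" using AB by auto
  have Abd: "\<And>y. y \<bullet> (A *v y) \<le> l0 * (norm y)^2 + (1 - l0) * (\<gamma> \<bullet> y)^2"
    using AB(4) unfolding l0_def by blast
  have spos: "s i > 0" for i unfolding s_def using pos by simp
  have sne: "s i \<noteq> 0" for i using spos[of i] by simp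
  have ss: "s i * s i = \<pi> i" for i unfolding s_def using nn by simp
  have epos: "e i > 0" for i unfolding e_def by simp
  have ene: "e i \<noteq> 0" for i using epos[of i] by simp
  have ee: "e i * e i = exp (t * f i)" for i unfolding e_def by (simp flip: exp_add)
  have Aij: "A$i$j = s i * P$i$j / s j" for i j unfolding A_def s_def by simp
  have gi: "\<gamma>$i = s i" for i unfolding \<gamma>_def s_def by simp
  have l0: "lam0 = l0" using defs(1) unfolding l0_def by simp
  have \<gamma>1: "\<gamma>1 = \<gamma>" using defs(5) unfolding \<gamma>_def by simp
  have Dd: "D = diagm s" using defs(3) unfolding s_def by simp
  have Dtd: "Dt = diagm e" using defs(4) unfolding e_def by simp
  have Dinv: "matrix_inv (diagm s) = diagm (\<lambda>i. 1 / s i)" by (rule diag_inv) (simp add: sne)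
  have Gij: "G$i$j = e i * A$i$j * e j" for i j
  proof -
    have "G = (((diagm (\<lambda>i. e i * s i)) ** P) ** diagm (\<lambda>i. 1 / s i)) ** diagm e"
      using defs(7) unfolding Dd Dtd Dinv diag_diag by simp
    hence "G$i$j = e i * s i * P$i$j * (1 / s j) * e j" by (simp add: diag_mult_left diag_mult_right)
    thus ?thesis by (simp add: Aij)
  qed
  have Hij: "H$i$j = e i * (l0 * (if i = j then 1 else 0) + (1 - l0) * (s i * s j)) * e j" for i j
  proof -
    have "H = (diagm e ** (l0 *\<^sub>R mat 1 + (1 - l0) *\<^sub>R (\<chi> i j. \<gamma> $ i * \<gamma> $ j))) ** diagm e"
      using defs(8) unfolding Dtd l0 \<gamma>1 by simp
    thus ?thesis by (simp add: diag_mult_left diag_mult_right mat_def gi)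
  qed
  define Y where "Y x = (\<chi> i. e i * x$i)" for x :: "real^'s"
  have quadG: "x \<bullet> (G *v x) = Y x \<bullet> (A *v Y x)" for x
    unfolding quad_sum Y_def by (simp add: Gij mult_ac)
  have quadH: "x \<bullet> (H *v x) = l0 * (norm (Y x))^2 + (1 - l0) * (\<gamma> \<bullet> Y x)^2" for x
  proof -
    define y where "y = Y x"
    have yi: "y$i = e i * x$i" for i unfolding y_def Y_def by simp
    have "x \<bullet> (H *v x) = (\<Sum>i\<in>UNIV. \<Sum>j\<in>UNIV. l0 * (if i = j then y$i * y$j else 0)
                          + (1 - l0) * ((s i * y$i) * (s j * y$j)))"
      unfolding quad_sum by (intro sum.cong refl) (simp add: Hij yi algebra_simps)
    also have "\<dots> = (\<Sum>i\<in>UNIV. \<Sum>j\<in>UNIV. l0 * (if i = j then y$i * y$j else 0))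
                   + (1 - l0) * (\<Sum>i\<in>UNIV. \<Sum>j\<in>UNIV. (s i * y$i) * (s j * y$j))"
      by (simp add: sum.distrib sum_distrib_left)
    also have "(\<Sum>i\<in>UNIV. \<Sum>j\<in>UNIV. l0 * (if i = j then y$i * y$j else 0)) = l0 * (norm y)^2"
    proof -
      have "(\<Sum>i\<in>UNIV. \<Sum>j\<in>UNIV. l0 * (if i = j then y$i * y$j else 0)) = (\<Sum>i\<in>UNIV. l0 * (y$i)^2)"
        by (intro sum.cong refl) (simp add: if_distrib power2_eq_square cong: if_cong)
      thus ?thesis by (simp add: norm_sq_sum sum_distrib_left)
    qed
    also have "(\<Sum>i\<in>UNIV. \<Sum>j\<in>UNIV. (s i * y$i) * (s j * y$j)) = (\<gamma> \<bullet> y)^2"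
      by (simp add: power2_eq_square inner_vec_def gi sum_product)
    finally show ?thesis unfolding y_def .
  qed
  have symG: "symm G" using symA unfolding symm_def by (simp add: Gij mult_ac)
  have symH: "symm H" unfolding symm_def by (simp add: Hij mult_ac)
  have Gnn: "G$i$j \<ge> 0" for i j
    using st spos[of i] spos[of j] epos[of i] epos[of j] unfolding stochastic_def
    by (simp add: Gij Aij)
  have zeta: "\<forall>x. x \<bullet> (G *v x) \<le> \<zeta> * (norm x)^2" "\<exists>u. norm u = 1 \<and> u \<bullet> (G *v u) = \<zeta>"
    using largest_eig_props[OF symG] defs(9) by simp_all
  have eta: "\<forall>x. x \<bullet> (H *v x) \<le> \<eta> * (norm x)^2" "\<exists>u. norm u = 1 \<and> u \<bullet> (H *v u) = \<eta>"
    using largest_eig_props[OF symH] defs(10) by simp_all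
  have zpos: "\<zeta> > 0"
  proof -
    define x0 where "x0 = (\<chi> i. s i / e i)"
    have "Y x0 = \<gamma>" unfolding Y_def x0_def by (simp add: vec_eq_iff gi ene)
    hence "x0 \<bullet> (G *v x0) = 1" using quadG[of x0] Ag gg by simp
    hence "1 \<le> \<zeta> * (norm x0)^2" using zeta(1) by metis
    moreover have "(norm x0)^2 \<ge> 0" by simp
    ultimately show ?thesis by (smt (verit) mult_nonpos_nonneg)
  qed
  have zle: "\<zeta> \<le> \<eta>"
  proof -
    obtain u where un: "norm u = 1" and uz: "u \<bullet> (G *v u) = \<zeta>" using zeta(2) by blast
    have "\<zeta> = Y u \<bullet> (A *v Y u)" using uz quadG by simp
    also have "\<dots> \<le> u \<bullet> (H *v u)" unfolding quadH by (rule Abd)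
    also have "\<dots> \<le> \<eta>" using eta(1) un by (metis mult.right_neutral one_power2)
    finally show ?thesis .
  qed
  have absG: "\<bar>x \<bullet> (G *v x)\<bar> \<le> \<zeta> * (norm x)^2" for x
  proof -
    define xa where "xa = (\<chi> i. \<bar>x$i\<bar>)"
    have "\<bar>x \<bullet> (G *v x)\<bar> = \<bar>\<Sum>i\<in>UNIV. \<Sum>j\<in>UNIV. x$i * G$i$j * x$j\<bar>" by (simp add: quad_sum)
    also have "\<dots> \<le> (\<Sum>i\<in>UNIV. \<bar>\<Sum>j\<in>UNIV. x$i * G$i$j * x$j\<bar>)" by (rule sum_abs)
    also have "\<dots> \<le> (\<Sum>i\<in>UNIV. \<Sum>j\<in>UNIV. \<bar>x$i * G$i$j * x$j\<bar>)" by (intro sum_mono sum_abs)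
    also have "\<dots> = xa \<bullet> (G *v xa)" unfolding quad_sum xa_def using Gnn by (simp add: abs_mult)
    also have "\<dots> \<le> \<zeta> * (norm xa)^2" using zeta(1) by blast
    also have "(norm xa)^2 = (norm x)^2" unfolding norm_sq_sum xa_def by simp
    finally show ?thesis .
  qed
  have nG: "norm (G *v x) \<le> \<zeta> * norm x" for x by (rule symm_norm_bound[OF symG absG])
  define c where "c = Dt *v \<gamma>1"
  have ci: "c$i = e i * s i" for i unfolding c_def Dtd \<gamma>1 diag_vec gi ..
  define m where "m = (\<Sum>i\<in>UNIV. \<pi> i * (e i * e i))"
  have nc: "(norm c)^2 = m" unfolding norm_sq_sum ci m_def
    by (intro sum.cong refl) (simp add: power2_eq_square ss[symmetric] mult_ac)
  have mpos: "m > 0"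
  proof -
    obtain i0 :: 's where True by blast
    have "0 < \<pi> i0 * (e i0 * e i0)" using pos epos[of i0] by simp
    also have "\<dots> \<le> m" unfolding m_def
      by (rule member_le_sum) (use nn epos in \<open>auto intro: mult_nonneg_nonneg less_imp_le\<close>)
    finally show ?thesis .
  qed
  have cle: "m \<le> \<eta>"
  proof -
    define q where "q i = e i * e i" for i
    have yc: "Y c = (\<chi> i. s i * q i)" unfolding Y_def q_def by (simp add: vec_eq_iff ci mult_ac)
    have ny: "(norm (Y c))^2 = (\<Sum>i\<in>UNIV. \<pi> i * (q i)^2)" unfolding yc norm_sq_sum
      by (intro sum.cong refl) (simp add: power2_eq_square ss[symmetric] mult_ac)
    have gy: "\<gamma> \<bullet> Y c = m" unfolding yc inner_vec_def m_def q_def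
      by (intro sum.cong refl) (simp add: gi ss[symmetric] mult_ac)
    have var: "m^2 \<le> (\<Sum>i\<in>UNIV. \<pi> i * (q i)^2)"
    proof -
      have "0 \<le> (\<Sum>i\<in>UNIV. \<pi> i * (q i - m)^2)" using nn by (intro sum_nonneg) simp
      also have "\<dots> = (\<Sum>i\<in>UNIV. \<pi> i * (q i)^2) - 2 * m * (\<Sum>i\<in>UNIV. \<pi> i * q i) + m^2 * (\<Sum>i\<in>UNIV. \<pi> i)"
        by (simp add: power2_diff sum_subtractf sum.distrib sum_distrib_left sum_distrib_right algebra_simps)
      also have "(\<Sum>i\<in>UNIV. \<pi> i * q i) = m" unfolding m_def q_def ..
      finally show ?thesis using s1 by (simp add: power2_eq_square)
    qed
    have l0nn: "l0 \<ge> 0" unfolding l0_def by simp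
    have "m * m = l0 * m^2 + (1 - l0) * m^2" by (simp add: power2_eq_square algebra_simps)
    also have "\<dots> \<le> l0 * (\<Sum>i\<in>UNIV. \<pi> i * (q i)^2) + (1 - l0) * m^2"
      using var l0nn by (simp add: mult_left_mono)
    also have "\<dots> = c \<bullet> (H *v c)" unfolding quadH ny gy ..
    also have "\<dots> \<le> \<eta> * (norm c)^2" using eta(1) by blast
    also have "\<dots> = \<eta> * m" unfolding nc ..
    finally have "m * m \<le> \<eta> * m" .
    thus ?thesis using mpos by simp
  qed
  define Q where "Q i j = P$i$j * exp (t * f j)" for i j
  define E0 where "E0 = exp (-(t * (real n * (\<mu> + \<epsilon>))))"
  have E0pos: "E0 > 0" unfolding E0_def by simp
  have ch: "pev \<le> E0 * (\<Sum>i\<in>UNIV. \<pi> i * vv Q n i)"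
    using chernoff[OF st nn assms(10), where n=n and f=f and a="real n * (\<mu> + \<epsilon>)"] defs(6)
    unfolding E0_def Q_def by simp
  define yv where "yv k = (\<chi> i. e i * s i * vv Q k i)" for k
  have yv0: "yv 0 = c" unfolding yv_def by (simp add: vec_eq_iff ci)
  have yvS: "yv (Suc k) = G *v yv k" for k
  proof (rule vec_eqI)
    fix i
    have "(G *v yv k)$i = (\<Sum>j\<in>UNIV. e i * s i * (Q i j * vv Q k j))"
      unfolding matrix_vector_mult_def yv_def
      by (simp add: Gij Aij Q_def ee[symmetric] sne ene mult_ac)
    also have "\<dots> = yv (Suc k) $ i" unfolding yv_def by (simp add: sum_distrib_left)
    finally show "yv (Suc k) $ i = (G *v yv k)$i" ..
  qed
  have nyv: "norm (yv k) \<le> \<zeta>^k * norm c" for k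
  proof (induction k)
    case 0 thus ?case by (simp add: yv0)
  next
    case (Suc k)
    have "norm (yv (Suc k)) \<le> \<zeta> * norm (yv k)" unfolding yvS by (rule nG)
    also have "\<dots> \<le> \<zeta> * (\<zeta>^k * norm c)" using Suc zpos by (simp add: mult_left_mono)
    finally show ?case by (simp add: mult_ac)
  qed
  obtain k where nk: "n = Suc k" using assms(9) by (metis Suc_pred' less_eq_Suc_le zero_less_Suc One_nat_def)
  have sumc: "(\<Sum>i\<in>UNIV. \<pi> i * vv Q (Suc k) i) = c \<bullet> yv k"
  proof -
    have "(\<Sum>i\<in>UNIV. \<pi> i * vv Q (Suc k) i) = (\<Sum>i\<in>UNIV. \<Sum>j\<in>UNIV. \<pi> i * P$i$j * (exp (t * f j) * vv Q k j))"
      by (simp add: Q_def sum_distrib_left mult_ac)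
    also have "\<dots> = (\<Sum>j\<in>UNIV. \<Sum>i\<in>UNIV. \<pi> i * P$i$j * (exp (t * f j) * vv Q k j))" by (rule sum.swap)
    also have "\<dots> = (\<Sum>j\<in>UNIV. \<pi> j * (exp (t * f j) * vv Q k j))"
      using sd unfolding stationary_dist_def by (simp add: sum_distrib_right[symmetric])
    also have "\<dots> = c \<bullet> yv k" unfolding inner_vec_def yv_def
      by (intro sum.cong refl) (simp add: ci ee[symmetric] ss[symmetric] mult_ac)
    finally show ?thesis .
  qed
  have "c \<bullet> yv k \<le> norm c * norm (yv k)" by (rule norm_cauchy_schwarz)
  also have "\<dots> \<le> norm c * (\<zeta>^k * norm c)" by (rule mult_left_mono[OF nyv norm_ge_zero])
  also have "\<dots> = m * \<zeta>^k" using nc by (simp add: power2_eq_square mult_ac)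
  finally have main: "pev \<le> E0 * (m * \<zeta>^k)"
    using ch E0pos unfolding nk sumc by (smt (verit) mult_left_mono)
  have ex: "exp (- real n * (t * (\<mu> + \<epsilon>) - ln z)) = E0 * z^n" if "z > 0" for z
  proof -
    have "- real n * (t * (\<mu> + \<epsilon>) - ln z) = -(t * (real n * (\<mu> + \<epsilon>))) + real n * ln z"
      by (simp add: algebra_simps)
    hence "exp (- real n * (t * (\<mu> + \<epsilon>) - ln z)) = E0 * exp (real n * ln z)"
      unfolding E0_def by (simp only: exp_add)
    also have "exp (real n * ln z) = z^n" using that by (simp add: exp_of_nat_mult)
    finally show ?thesis .
  qed
  have epos': "\<eta> > 0" using zpos zle by simp
  have r1: "(norm (Dt *v \<gamma>1))^2 / \<zeta> * exp (- real n * (t * (\<mu> + \<epsilon>) - ln \<zeta>)) = E0 * (m * \<zeta>^k)"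
    unfolding ex[OF zpos] c_def[symmetric] nc unfolding nk using zpos by (simp add: field_simps)
  have r2: "(norm (Dt *v \<gamma>1))^2 / \<eta> * exp (- real n * (t * (\<mu> + \<epsilon>) - ln \<eta>)) = E0 * (m * \<eta>^k)"
    unfolding ex[OF epos'] c_def[symmetric] nc unfolding nk using epos' by (simp add: field_simps)
  have r3: "exp (- real n * (t * (\<mu> + \<epsilon>) - ln \<eta>)) = E0 * (\<eta> * \<eta>^k)"
    unfolding ex[OF epos'] unfolding nk by simp
  have pk: "\<zeta>^k \<le> \<eta>^k" using zpos zle by (simp add: power_mono)
  have s2: "E0 * (m * \<zeta>^k) \<le> E0 * (m * \<eta>^k)"
    using pk mpos E0pos by (simp add: mult_left_mono)
  have s3: "E0 * (m * \<eta>^k) \<le> E0 * (\<eta> * \<eta>^k)"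
    using cle E0pos epos' by (simp add: mult_left_mono mult_right_mono)
  show ?thesis unfolding r1 r2 unfolding r3 using main s2 s3 by linarith
qed

end
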